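(* Let $G=S_\infty$ and $m<\omega$. (a) If $M\subseteq S(G)$ is a minimal subflow, then $\phi(\mathcal{F}^M_m)$ is a thick ultrafilter on $[\omega]^m$. (b) Conversely, if $p$ is a thick ultrafilter on $[\omega]^m$, then $\{\phi^{-1}(T):T\in p\}$ generates a maximal thick filter on $H_m$, and hence there is a minimal subflow $M\subseteq S(G)$ with $p=\phi(\mathcal{F}^M_m)$.
   Context: View $S_\infty$ as the automorphism group of $\omega$ in the empty language with $\mathbf{A}_n=n=\{0,\dots,n-1\}$; $H_n$ is the set of injections $n\to\omega$, written as tuples $(s_0,\dots,s_{n-1})$, and $\mathrm{Emb}(\mathbf{A}_m,\mathbf{A}_n)$ the set of injections $m\to n$. $S(G)$ is the inverse limit of the spaces $\beta H_n$ of ultrafilters along the continuous extensions of restriction maps $H_n\to H_m$; $\alpha(n)$ denotes the $n$-th coordinate. Right $G$-action: for $S\subseteq H_m$, $S\in(\alpha g)(m)$ iff $\{x\in H_n:x\circ g|_m\in S\}\in\alpha(n)$, for $n$ with $g(\{0,..,m-1\})\subseteq n$. A minimal subflow is a nonempty closed $G$-invariant subset containing no proper such subset. For closed $Y$, $\mathcal{F}^Y_m=\{T\subseteq H_m:T\in\alpha(m)\ \forall\alpha\in Y\}$. $T\subseteq H_m$ is thick if for every $n\geq m$ there is $s\in H_n$ with $s\circ\mathrm{Emb}(\mathbf{A}_m,\mathbf{A}_n)\subseteq T$; $T\subseteq[\omega]^m$ is thick if for every $n\geq m$ there is $s\in[\omega]^n$ with $[s]^m\subseteq T$. A thick filter (ultrafilter)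 is one all of whose members are thick; a maximal thick filter is one maximal among thick filters. $\phi:H_m\to[\omega]^m$ is $\phi(y_0,\dots,y_{m-1})=\{y_0,\dots,y_{m-1}\}$, and for a filter $\mathcal{F}$ on $H_m$, $\phi(\mathcal{F})=\{T\subseteq[\omega]^m:\phi^{-1}(T)\in\mathcal{F}\}$. *)

theory Defs
  imports Main
begin

text \<open>Injections n -> omega, written as tuples (s_0,...,s_{n-1}): distinct lists of length n.\<close>
definition H :: "nat \<Rightarrow> nat list set" where
  "H n = {xs. length xs = n \<and> distinct xs}"

text \<open>Emb(A_m, A_n): injections m -> n, as distinct lists of length m with entries < n.\<close>
definition Emb :: "nat \<Rightarrow> nat \<Rightarrow> nat list set" where
  "Emb m n = {f. length f = m \<and> distinct f \<and> set f \<subseteq> {..<n}}"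

definition comp_tuple :: "nat list \<Rightarrow> nat list \<Rightarrow> nat list" where
  "comp_tuple s f = map (\<lambda>i. s ! i) f"

definition is_filter_on :: "'a set \<Rightarrow> 'a set set \<Rightarrow> bool" where
  "is_filter_on X F \<longleftrightarrow> F \<subseteq> Pow X \<and> X \<in> F \<and>
     (\<forall>A B. A \<in> F \<longrightarrow> B \<in> F \<longrightarrow> A \<inter> B \<in> F) \<and>
     (\<forall>A B. A \<in> F \<longrightarrow> A \<subseteq> B \<longrightarrow> B \<subseteq> X \<longrightarrow> B \<in> F)"

definition is_ultrafilter_on :: "'a set \<Rightarrow> 'a set set \<Rightarrow> bool" where
  "is_ultrafilter_on X U \<longleftrightarrow> is_filter_on X U \<and> {} \<notin> U \<and>
     (\<forall>A. A \<subseteq> X \<longrightarrow> A \<in> U \<or> X - A \<in> U)"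

definition filter_generated :: "'a set \<Rightarrow> 'a set set \<Rightarrow> 'a set set" where
  "filter_generated X B = {T. T \<subseteq> X \<and>
     (T = X \<or> (\<exists>F. F \<subseteq> B \<and> finite F \<and> F \<noteq> {} \<and> \<Inter>F \<subseteq> T))}"

text \<open>S(G): coherent sequences of ultrafilters alpha(n) on H_n (inverse limit of beta H_n
  along the extensions of the restriction maps H_n -> H_m, x |-> take m x).\<close>
definition SG :: "(nat \<Rightarrow> nat list set set) set" where
  "SG = {\<alpha>. (\<forall>n. is_ultrafilter_on (H n) (\<alpha> n)) \<and>
            (\<forall>m n S. m \<le> n \<longrightarrow> S \<subseteq> H m \<longrightarrow>
                 (S \<in> \<alpha> m \<longleftrightarrow> {x \<in> H n. take m x \<in> S} \<in> \<alpha> n))}"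

definition Sinf :: "(nat \<Rightarrow> nat) set" where
  "Sinf = {g. bij g}"

text \<open>Right action: S in (alpha g)(m) iff {x in H_n : x o g|_m in S} in alpha(n),
  for some (here: the least) n with g({0..m-1}) subseteq n.\<close>
definition act :: "(nat \<Rightarrow> nat list set set) \<Rightarrow> (nat \<Rightarrow> nat) \<Rightarrow> (nat \<Rightarrow> nat list set set)" where
  "act \<alpha> g = (\<lambda>m. let n = (LEAST n. g ` {..<m} \<subseteq> {..<n}) in
      {S. S \<subseteq> H m \<and> {x \<in> H n. map (\<lambda>i. x ! g i) [0..<m] \<in> S} \<in> \<alpha> n})"

text \<open>Closed subsets of S(G) in the inverse-limit (product of Stone spaces) topology.
  The sets {alpha in S(G). A in alpha(m)} (A subseteq H_m) form a base of this topology
  (finite intersections reduce to one such set by coherence), so Y is closed iff every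
  point outside Y has such a basic neighbourhood disjoint from Y.\<close>
definition closed_SG :: "(nat \<Rightarrow> nat list set set) set \<Rightarrow> bool" where
  "closed_SG Y \<longleftrightarrow> Y \<subseteq> SG \<and>
     (\<forall>\<alpha> \<in> SG - Y. \<exists>m A. A \<subseteq> H m \<and> A \<in> \<alpha> m \<and> (\<forall>\<beta>\<in>Y. A \<notin> \<beta> m))"

definition invariant_SG :: "(nat \<Rightarrow> nat list set set) set \<Rightarrow> bool" where
  "invariant_SG Y \<longleftrightarrow> (\<forall>\<alpha>\<in>Y. \<forall>g\<in>Sinf. act \<alpha> g \<in> Y)"

definition subflow :: "(nat \<Rightarrow> nat list set set) set \<Rightarrow> bool" where
  "subflow Y \<longleftrightarrow> Y \<noteq> {} \<and> closed_SG Y \<and> invariant_SG Y"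

definition minimal_subflow :: "(nat \<Rightarrow> nat list set set) set \<Rightarrow> bool" where
  "minimal_subflow M \<longleftrightarrow> subflow M \<and> (\<forall>Y. Y \<subseteq> M \<longrightarrow> subflow Y \<longrightarrow> Y = M)"

definition FY :: "(nat \<Rightarrow> nat list set set) set \<Rightarrow> nat \<Rightarrow> nat list set set" where
  "FY Y m = {T. T \<subseteq> H m \<and> (\<forall>\<alpha>\<in>Y. T \<in> \<alpha> m)}"

definition thick_H :: "nat \<Rightarrow> nat list set \<Rightarrow> bool" where
  "thick_H m T \<longleftrightarrow> T \<subseteq> H m \<and>
     (\<forall>n\<ge>m. \<exists>s\<in>H n. comp_tuple s ` Emb m n \<subseteq> T)"

definition msets :: "nat \<Rightarrow> nat set set" where
  "msets m = {A. finite A \<and> card A = m}"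

definition thick_S :: "nat \<Rightarrow> nat set set \<Rightarrow> bool" where
  "thick_S m T \<longleftrightarrow> T \<subseteq> msets m \<and>
     (\<forall>n\<ge>m. \<exists>s \<in> msets n. {B. B \<subseteq> s \<and> B \<in> msets m} \<subseteq> T)"

definition thick_filter_H :: "nat \<Rightarrow> nat list set set \<Rightarrow> bool" where
  "thick_filter_H m F \<longleftrightarrow> is_filter_on (H m) F \<and> (\<forall>T\<in>F. thick_H m T)"

definition max_thick_filter_H :: "nat \<Rightarrow> nat list set set \<Rightarrow> bool" where
  "max_thick_filter_H m F \<longleftrightarrow> thick_filter_H m F \<and>
     (\<forall>F'. thick_filter_H m F' \<longrightarrow> F \<subseteq> F' \<longrightarrow> F' = F)"

definition thick_ultrafilter_S :: "nat \<Rightarrow> nat set set set \<Rightarrow> bool" where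
  "thick_ultrafilter_S m p \<longleftrightarrow> is_ultrafilter_on (msets m) p \<and> (\<forall>T\<in>p. thick_S m T)"

definition phi :: "nat list \<Rightarrow> nat set" where
  "phi y = set y"

definition phi_filter :: "nat \<Rightarrow> nat list set set \<Rightarrow> nat set set set" where
  "phi_filter m F = {T. T \<subseteq> msets m \<and> {y \<in> H m. phi y \<in> T} \<in> F}"

definition phi_pre :: "nat \<Rightarrow> nat set set \<Rightarrow> nat list set" where
  "phi_pre m T = {y \<in> H m. phi y \<in> T}"

end

theory Submission
  imports Defs "HOL-Library.Ramsey"
begin


definition pi :: "(nat \<Rightarrow> nat) \<Rightarrow> nat \<Rightarrow> nat list \<Rightarrow> nat list" where
  "pi g m x = map (\<lambda>i. x ! g i) [0..<m]"

definition bnd :: "(nat \<Rightarrow> nat) \<Rightarrow> nat \<Rightarrow> nat" where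
  "bnd g m = Suc (Max (insert 0 (g ` {..<m})))"

lemma bnd_le: "m \<le> m' \<Longrightarrow> g ` {..<m} \<subseteq> {..<bnd g m'}"
proof
  fix y assume "m \<le> m'" "y \<in> g ` {..<m}"
  then have "y \<in> insert 0 (g ` {..<m'})" by auto
  then have "y \<le> Max (insert 0 (g ` {..<m'}))" by (intro Max_ge) auto
  then show "y \<in> {..<bnd g m'}" by (auto simp: bnd_def)
qed

lemma bnd: "g ` {..<m} \<subseteq> {..<bnd g m}"
  using bnd_le by blast

lemma H_take: "x \<in> H n \<Longrightarrow> k \<le> n \<Longrightarrow> take k x \<in> H k"
  by (auto simp: H_def)

lemma map_inj_H: "inj e \<Longrightarrow> map e [0..<n] \<in> H n"
  by (auto simp: H_def distinct_map inj_on_def)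

lemma pi_H:
  assumes "inj g" "g ` {..<m} \<subseteq> {..<n}" "x \<in> H n"
  shows "pi g m x \<in> H m"
proof -
  have "inj_on (\<lambda>i. x ! g i) {0..<m}"
  proof (rule inj_onI)
    fix i j assume ij: "i \<in> {0..<m}" "j \<in> {0..<m}" "x ! g i = x ! g j"
    have "g i < length x" "g j < length x" using assms ij by (auto simp: H_def)
    then have "g i = g j" using ij assms(3) nth_eq_iff_index_eq by (auto simp: H_def)
    then show "i = j" using assms(1) by (auto dest: injD)
  qed
  then show ?thesis by (auto simp: pi_def H_def distinct_map)
qed

lemma pi_take:
  assumes "g ` {..<m} \<subseteq> {..<k}"
  shows "pi g m (take k x) = pi g m x"
  using assms by (force simp: pi_def intro!: nth_take)

lemma uf_sub: "is_ultrafilter_on X U \<Longrightarrow> A \<in> U \<Longrightarrow> A \<subseteq> X"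
  by (auto simp: is_ultrafilter_on_def is_filter_on_def)
lemma uf_int: "is_ultrafilter_on X U \<Longrightarrow> A \<in> U \<Longrightarrow> B \<in> U \<Longrightarrow> A \<inter> B \<in> U"
  by (auto simp: is_ultrafilter_on_def is_filter_on_def)
lemma uf_ne: "is_ultrafilter_on X U \<Longrightarrow> {} \<notin> U"
  by (auto simp: is_ultrafilter_on_def)
lemma uf_top: "is_ultrafilter_on X U \<Longrightarrow> X \<in> U"
  by (auto simp: is_ultrafilter_on_def is_filter_on_def)
lemma uf_mono: "is_ultrafilter_on X U \<Longrightarrow> A \<in> U \<Longrightarrow> A \<subseteq> B \<Longrightarrow> B \<subseteq> X \<Longrightarrow> B \<in> U"
  by (auto simp: is_ultrafilter_on_def is_filter_on_def)
lemma uf_compl: "is_ultrafilter_on X U \<Longrightarrow> A \<subseteq> X \<Longrightarrow> (X - A \<in> U) \<longleftrightarrow> A \<notin> U"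
proof -
  assume u: "is_ultrafilter_on X U" and a: "A \<subseteq> X"
  show ?thesis
  proof
    assume "X - A \<in> U" show "A \<notin> U"
    proof
      assume "A \<in> U"
      then have "A \<inter> (X - A) \<in> U" using uf_int[OF u] \<open>X - A \<in> U\<close> by blast
      then show False using uf_ne[OF u] by auto
    qed
  next
    assume "A \<notin> U" then show "X - A \<in> U" using u a by (auto simp: is_ultrafilter_on_def)
  qed
qed

lemma SG_uf: "\<alpha> \<in> SG \<Longrightarrow> is_ultrafilter_on (H n) (\<alpha> n)"
  by (auto simp: SG_def)
lemma SG_coh: "\<alpha> \<in> SG \<Longrightarrow> m \<le> n \<Longrightarrow> S \<subseteq> H m \<Longrightarrow> (S \<in> \<alpha> m \<longleftrightarrow> {x \<in> H n. take m x \<in> S} \<in> \<alpha> n)"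
  by (auto simp: SG_def)

lemma act_char:
  assumes a: "\<alpha> \<in> SG" and g: "inj g" and n: "g ` {..<m} \<subseteq> {..<n}"
  shows "act \<alpha> g m = {S. S \<subseteq> H m \<and> {x\<in>H n. pi g m x \<in> S} \<in> \<alpha> n}"
proof -
  define n0 where "n0 = (LEAST n. g ` {..<m} \<subseteq> {..<n})"
  have n0: "g ` {..<m} \<subseteq> {..<n0}" unfolding n0_def by (rule LeastI[of _ n]) (rule n)
  have le: "n0 \<le> n" unfolding n0_def by (rule Least_le) (rule n)
  have act: "act \<alpha> g m = {S. S \<subseteq> H m \<and> {x\<in>H n0. pi g m x \<in> S} \<in> \<alpha> n0}"
    by (simp add: act_def Let_def pi_def n0_def)
  show ?thesis unfolding act
  proof (intro Collect_cong conj_cong refl)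
    fix S assume S: "S \<subseteq> H m"
    let ?K = "{x\<in>H n0. pi g m x \<in> S}"
    have "?K \<in> \<alpha> n0 \<longleftrightarrow> {x \<in> H n. take n0 x \<in> ?K} \<in> \<alpha> n"
      by (rule SG_coh[OF a le]) auto
    also have "{x \<in> H n. take n0 x \<in> ?K} = {x\<in>H n. pi g m x \<in> S}"
      using H_take[OF _ le] pi_take[OF n0] by auto
    finally show "?K \<in> \<alpha> n0 \<longleftrightarrow> {x\<in>H n. pi g m x \<in> S} \<in> \<alpha> n" .
  qed
qed




lemma Sinf_inj: "g \<in> Sinf \<Longrightarrow> inj g" by (auto simp: Sinf_def bij_def)
lemma Sinf_id: "id \<in> Sinf" by (auto simp: Sinf_def)
lemma Sinf_comp: "g \<in> Sinf \<Longrightarrow> h \<in> Sinf \<Longrightarrow> g \<circ> h \<in> Sinf"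
  by (auto simp: Sinf_def bij_comp)

lemma pushforward_uf:
  assumes u: "is_ultrafilter_on X U" and f: "\<And>x. x \<in> X \<Longrightarrow> f x \<in> Y"
  shows "is_ultrafilter_on Y {S. S \<subseteq> Y \<and> {x\<in>X. f x \<in> S} \<in> U}"
proof -
  have top: "{x\<in>X. f x \<in> Y} = X" using f by auto
  have fil: "is_filter_on Y {S. S \<subseteq> Y \<and> {x\<in>X. f x \<in> S} \<in> U}"
    unfolding is_filter_on_def
  proof (intro conjI allI impI)
    show "Y \<in> {S. S \<subseteq> Y \<and> {x \<in> X. f x \<in> S} \<in> U}" using top uf_top[OF u] by auto
  next
    fix A B assume "A \<in> {S. S \<subseteq> Y \<and> {x \<in> X. f x \<in> S} \<in> U}" "B \<in> {S. S \<subseteq> Y \<and> {x \<in> X. f x \<in> S} \<in> U}"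
    then have "{x \<in> X. f x \<in> A} \<inter> {x \<in> X. f x \<in> B} \<in> U" "A \<inter> B \<subseteq> Y" using uf_int[OF u] by auto
    moreover have "{x \<in> X. f x \<in> A} \<inter> {x \<in> X. f x \<in> B} = {x \<in> X. f x \<in> A \<inter> B}" by auto
    ultimately show "A \<inter> B \<in> {S. S \<subseteq> Y \<and> {x \<in> X. f x \<in> S} \<in> U}" by auto
  next
    fix A B assume "A \<in> {S. S \<subseteq> Y \<and> {x \<in> X. f x \<in> S} \<in> U}" "A \<subseteq> B" "B \<subseteq> Y"
    then show "B \<in> {S. S \<subseteq> Y \<and> {x \<in> X. f x \<in> S} \<in> U}"
      using uf_mono[OF u, of "{x \<in> X. f x \<in> A}" "{x \<in> X. f x \<in> B}"] by auto
  qed auto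
  show ?thesis unfolding is_ultrafilter_on_def
  proof (intro conjI fil allI impI)
    show "{} \<notin> {S. S \<subseteq> Y \<and> {x \<in> X. f x \<in> S} \<in> U}" using uf_ne[OF u] by auto
  next
    fix A assume A: "A \<subseteq> Y"
    have "{x \<in> X. f x \<in> A} \<in> U \<or> X - {x \<in> X. f x \<in> A} \<in> U"
      using uf_compl[OF u, of "{x \<in> X. f x \<in> A}"] by auto
    moreover have "X - {x \<in> X. f x \<in> A} = {x \<in> X. f x \<in> Y - A}" using f by auto
    ultimately show "A \<in> {S. S \<subseteq> Y \<and> {x \<in> X. f x \<in> S} \<in> U} \<or>
          Y - A \<in> {S. S \<subseteq> Y \<and> {x \<in> X. f x \<in> S} \<in> U}" using A by auto
  qed
qed

lemma act_SG:
  assumes a: "\<alpha> \<in> SG" and g: "inj g"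
  shows "act \<alpha> g \<in> SG"
  unfolding SG_def
proof (intro CollectI conjI allI impI)
  fix n
  show "is_ultrafilter_on (H n) (act \<alpha> g n)"
    unfolding act_char[OF a g bnd]
    by (rule pushforward_uf[OF SG_uf[OF a]]) (rule pi_H[OF g bnd])
next
  fix m n S assume mn: "m \<le> n" and S: "S \<subseteq> H m"
  let ?N = "bnd g n"
  have b1: "g ` {..<m} \<subseteq> {..<?N}" by (rule bnd_le[OF mn])
  have b2: "g ` {..<n} \<subseteq> {..<?N}" by (rule bnd)
  have eq: "{x \<in> H ?N. pi g n x \<in> {y \<in> H n. take m y \<in> S}} = {x \<in> H ?N. pi g m x \<in> S}"
  proof -
    have "\<And>x. take m (pi g n x) = pi g m x" using mn by (auto simp: pi_def take_map)
    then show ?thesis using pi_H[OF g b2] by auto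
  qed
  show "S \<in> act \<alpha> g m \<longleftrightarrow> {x \<in> H n. take m x \<in> S} \<in> act \<alpha> g n"
    unfolding act_char[OF a g b1] act_char[OF a g b2] using S eq by auto
qed

lemma act_comp:
  assumes a: "\<alpha> \<in> SG" and g: "inj g" and h: "inj h"
  shows "act (act \<alpha> g) h = act \<alpha> (g \<circ> h)"
proof
  fix m :: nat
  let ?n1 = "bnd h m"
  let ?n2 = "bnd g ?n1"
  have gh: "inj (g \<circ> h)" using g h by (simp add: inj_compose)
  have b: "(g \<circ> h) ` {..<m} \<subseteq> {..<?n2}" using bnd[of h m] bnd[of g ?n1] by auto
  have eq: "{z \<in> H ?n2. pi g ?n1 z \<in> {x \<in> H ?n1. pi h m x \<in> S}} = {z \<in> H ?n2. pi (g \<circ> h) m z \<in> S}" for S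
  proof -
    have "\<And>z. pi h m (pi g ?n1 z) = pi (g \<circ> h) m z"
      using bnd[of h m] by (force simp: pi_def)
    then show ?thesis using pi_H[OF g bnd] by auto
  qed
  show "act (act \<alpha> g) h m = act \<alpha> (g \<circ> h) m"
    unfolding act_char[OF act_SG[OF a g] h bnd] act_char[OF a gh b] act_char[OF a g bnd]
    using eq by auto
qed

lemma act_id:
  assumes a: "\<alpha> \<in> SG" shows "act \<alpha> id = \<alpha>"
proof
  fix m :: nat
  have b: "id ` {..<m} \<subseteq> {..<m}" by auto
  have "\<And>x. x \<in> H m \<Longrightarrow> pi id m x = x" by (auto simp: pi_def H_def map_nth)
  then have "\<And>S. {x \<in> H m. pi id m x \<in> S} = H m \<inter> S" by auto
  moreover have "\<And>S. S \<in> \<alpha> m \<Longrightarrow> S \<subseteq> H m" using uf_sub[OF SG_uf[OF a]] by blast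
  ultimately show "act \<alpha> id m = \<alpha> m"
    unfolding act_char[OF a inj_on_id b] by (auto simp: Int_absorb1)
qed




definition fip :: "'a set \<Rightarrow> 'a set set \<Rightarrow> bool" where
  "fip I F \<longleftrightarrow> (\<forall>F'. F' \<subseteq> F \<longrightarrow> finite F' \<longrightarrow> I \<inter> \<Inter>F' \<noteq> {})"

lemma fip_insert_mem:
  assumes max: "\<forall>X\<in>{F. F \<subseteq> Pow I \<and> B \<subseteq> F \<and> fip I F}. U \<subseteq> X \<longrightarrow> X = U"
    and U: "U \<subseteq> Pow I" "B \<subseteq> U" and X: "X \<subseteq> I" and f: "fip I (insert X U)"
  shows "X \<in> U"
proof -
  have "insert X U \<in> {F. F \<subseteq> Pow I \<and> B \<subseteq> F \<and> fip I F}" using U X f by auto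
  then have "U \<subseteq> insert X U \<longrightarrow> insert X U = U" by (rule bspec[OF max])
  then have "insert X U = U" by blast
  then show ?thesis by blast
qed

lemma uf_exists:
  assumes B: "B \<subseteq> Pow I" and fB: "fip I B"
  shows "\<exists>U. is_ultrafilter_on I U \<and> B \<subseteq> U"
proof -
  let ?A = "{F. F \<subseteq> Pow I \<and> B \<subseteq> F \<and> fip I F}"
  have "\<exists>M\<in>?A. \<forall>X\<in>?A. M \<subseteq> X \<longrightarrow> X = M"
  proof (rule Zorn_Lemma2, intro ballI)
    fix C assume C: "C \<in> chains ?A"
    show "\<exists>U\<in>?A. \<forall>X\<in>C. X \<subseteq> U"
    proof (intro bexI[of _ "B \<union> \<Union>C"] ballI)
      show "B \<union> \<Union>C \<in> ?A"
      proof (intro CollectI conjI)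
        show "B \<union> \<Union>C \<subseteq> Pow I" using B C unfolding chains_def by blast
        show "B \<subseteq> B \<union> \<Union>C" by auto
        show "fip I (B \<union> \<Union>C)" unfolding fip_def
        proof (intro allI impI)
          fix F' assume F': "F' \<subseteq> B \<union> \<Union>C" "finite F'"
          show "I \<inter> \<Inter>F' \<noteq> {}"
          proof (cases "C = {}")
            case True then show ?thesis using F' fB by (auto simp: fip_def)
          next
            case False
            have f1: "finite (F' - B)" and f2: "F' - B \<subseteq> \<Union>C" using F' by auto
            have f3: "subset.chain ?A C" using C by (simp add: chains_alt_def)
            obtain G where G: "G \<in> C" "F' - B \<subseteq> G"
              by (rule finite_subset_Union_chain[OF f1 f2 False f3])
            then have "G \<in> ?A" using C unfolding chains_def by blast
            then have "F' \<subseteq> G" "fip I G" using G by auto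
            then show ?thesis using F' by (auto simp: fip_def)
          qed
        qed
      qed
    qed auto
  qed
  then obtain U where U0: "U \<in> ?A" and max: "\<forall>X\<in>?A. U \<subseteq> X \<longrightarrow> X = U"
    by (elim bexE)
  then have U: "U \<subseteq> Pow I" "B \<subseteq> U" "fip I U" by simp_all
  have mem: "\<And>X. X \<subseteq> I \<Longrightarrow> fip I (insert X U) \<Longrightarrow> X \<in> U"
    using fip_insert_mem[OF max U(1,2)] by blast
  have fipU: "\<And>F'. F' \<subseteq> U \<Longrightarrow> finite F' \<Longrightarrow> I \<inter> \<Inter>F' \<noteq> {}" using U(3) by (auto simp: fip_def)
  have ne: "{} \<notin> U" using fipU[of "{{}}"] by auto
  have top: "I \<in> U"
  proof (rule mem)
    show "fip I (insert I U)" unfolding fip_def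
    proof (intro allI impI)
      fix F' assume "F' \<subseteq> insert I U" "finite F'"
      then have "I \<inter> \<Inter>(F' - {I}) \<noteq> {}" using fipU[of "F' - {I}"] by auto
      moreover have "I \<inter> \<Inter>F' = I \<inter> \<Inter>(F' - {I})" by auto
      ultimately show "I \<inter> \<Inter>F' \<noteq> {}" by simp
    qed
  qed auto
  have int: "X \<inter> Y \<in> U" if "X \<in> U" "Y \<in> U" for X Y
  proof (rule mem)
    show "X \<inter> Y \<subseteq> I" using that U(1) by auto
    show "fip I (insert (X \<inter> Y) U)" unfolding fip_def
    proof (intro allI impI)
      fix F' assume F': "F' \<subseteq> insert (X \<inter> Y) U" "finite F'"
      let ?G = "insert X (insert Y (F' - {X \<inter> Y}))"
      have "I \<inter> \<Inter>?G \<noteq> {}" using fipU[of ?G] F' that by auto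
      moreover have "I \<inter> \<Inter>?G \<subseteq> I \<inter> \<Inter>F'" by auto
      ultimately show "I \<inter> \<Inter>F' \<noteq> {}" by blast
    qed
  qed
  have sup: "Y \<in> U" if "X \<in> U" "X \<subseteq> Y" "Y \<subseteq> I" for X Y
  proof (rule mem)
    show "Y \<subseteq> I" by fact
    show "fip I (insert Y U)" unfolding fip_def
    proof (intro allI impI)
      fix F' assume F': "F' \<subseteq> insert Y U" "finite F'"
      let ?G = "insert X (F' - {Y})"
      have "I \<inter> \<Inter>?G \<noteq> {}" using fipU[of ?G] F' that by auto
      moreover have "I \<inter> \<Inter>?G \<subseteq> I \<inter> \<Inter>F'" using that by auto
      ultimately show "I \<inter> \<Inter>F' \<noteq> {}" by blast
    qed
  qed
  have ultra: "X \<in> U \<or> I - X \<in> U" if X: "X \<subseteq> I" for X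
  proof (rule ccontr)
    assume "\<not> (X \<in> U \<or> I - X \<in> U)"
    then have n1: "\<not> fip I (insert X U)" and n2: "\<not> fip I (insert (I - X) U)"
      using mem X by auto
    obtain F1 where F1: "F1 \<subseteq> insert X U" "finite F1" "I \<inter> \<Inter>F1 = {}"
      using n1 by (auto simp: fip_def)
    obtain F2 where F2: "F2 \<subseteq> insert (I - X) U" "finite F2" "I \<inter> \<Inter>F2 = {}"
      using n2 by (auto simp: fip_def)
    let ?G = "(F1 - {X}) \<union> (F2 - {I - X})"
    have "I \<inter> \<Inter>?G \<noteq> {}" using fipU[of ?G] F1 F2 by auto
    then obtain e where e: "e \<in> I" "e \<in> \<Inter>?G" by blast
    show False
    proof (cases "e \<in> X")
      case True
      then have "e \<in> I \<inter> \<Inter>F1" using e by auto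
      then show False using F1 by auto
    next
      case False
      then have "e \<in> I \<inter> \<Inter>F2" using e by auto
      then show False using F2 by auto
    qed
  qed
  have "is_ultrafilter_on I U"
    unfolding is_ultrafilter_on_def is_filter_on_def
  proof (intro conjI allI impI)
    show "U \<subseteq> Pow I" by (rule U(1))
    show "I \<in> U" by (rule top)
    show "{} \<notin> U" by (rule ne)
    fix X Y
    show "X \<in> U \<Longrightarrow> Y \<in> U \<Longrightarrow> X \<inter> Y \<in> U" by (rule int)
    show "X \<in> U \<Longrightarrow> X \<subseteq> Y \<Longrightarrow> Y \<subseteq> I \<Longrightarrow> Y \<in> U" by (rule sup)
  next
    fix X show "X \<subseteq> I \<Longrightarrow> X \<in> U \<or> I - X \<in> U" by (rule ultra)
  qed
  then show ?thesis using U(2) by (intro exI[of _ U] conjI)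
qed



definition EE :: "nat \<Rightarrow> nat list set \<Rightarrow> (nat \<Rightarrow> nat) set" where
  "EE n K = {e. inj e \<and> map e [0..<n] \<in> K}"

definition aU :: "(nat \<Rightarrow> nat) set set \<Rightarrow> nat \<Rightarrow> nat list set set" where
  "aU U n = {S. S \<subseteq> H n \<and> EE n S \<in> U}"

lemma aU_SG:
  assumes u: "is_ultrafilter_on {e. inj e} U"
  shows "aU U \<in> SG"
  unfolding SG_def
proof (intro CollectI conjI allI impI)
  fix n
  have eq: "aU U n = {S. S \<subseteq> H n \<and> {e\<in>{e. inj e}. map e [0..<n] \<in> S} \<in> U}"
    by (simp add: aU_def EE_def)
  show "is_ultrafilter_on (H n) (aU U n)" unfolding eq
    by (rule pushforward_uf[OF u]) (auto intro: map_inj_H)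
next
  fix m n S assume mn: "m \<le> n" and S: "S \<subseteq> H m"
  have "EE n {x \<in> H n. take m x \<in> S} = EE m S"
    using mn map_inj_H[of _ n] by (auto simp: EE_def take_map)
  then show "S \<in> aU U m \<longleftrightarrow> {x \<in> H n. take m x \<in> S} \<in> aU U n"
    using S by (auto simp: aU_def)
qed

lemma compact_SG:
  assumes R: "\<And>n K. (n, K) \<in> R \<Longrightarrow> K \<subseteq> H n"
    and F: "\<And>R'. R' \<subseteq> R \<Longrightarrow> finite R' \<Longrightarrow> \<exists>e. inj e \<and> (\<forall>(n, K)\<in>R'. map e [0..<n] \<in> K)"
  shows "\<exists>\<gamma>\<in>SG. \<forall>(n, K)\<in>R. K \<in> \<gamma> n"
proof -
  let ?B = "(\<lambda>(n, K). EE n K) ` R"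
  have B: "?B \<subseteq> Pow {e. inj e}" by (auto simp: EE_def)
  have fB: "fip {e. inj e} ?B" unfolding fip_def
  proof (intro allI impI)
    fix F' assume F': "F' \<subseteq> ?B" "finite F'"
    then obtain R' where R': "R' \<subseteq> R" "finite R'" "F' = (\<lambda>(n, K). EE n K) ` R'"
      using finite_subset_image[OF F'(2) F'(1)] by blast
    obtain e where e: "inj e" "\<forall>(n, K)\<in>R'. map e [0..<n] \<in> K" using F[OF R'(1,2)] by blast
    then have "e \<in> {e. inj e} \<inter> \<Inter>F'" using R'(3) by (auto simp: EE_def)
    then show "{e. inj e} \<inter> \<Inter>F' \<noteq> {}" by blast
  qed
  obtain U where U: "is_ultrafilter_on {e. inj e} U" "?B \<subseteq> U" using uf_exists[OF B fB] by blast
  show ?thesis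
  proof (intro bexI[OF _ aU_SG[OF U(1)]] ballI)
    fix p assume p: "p \<in> R"
    obtain n K where "p = (n, K)" by force
    then show "case p of (n, K) \<Rightarrow> K \<in> aU U n" using p U(2) R by (auto simp: aU_def)
  qed
qed

lemma closed_mem:
  assumes C: "closed_SG C" and g: "\<gamma> \<in> SG" and F: "\<And>n B. B \<in> FY C n \<Longrightarrow> B \<in> \<gamma> n"
  shows "\<gamma> \<in> C"
proof (rule ccontr)
  assume "\<gamma> \<notin> C"
  then have "\<gamma> \<in> SG - C" using g by blast
  then obtain m A where A: "A \<subseteq> H m" "A \<in> \<gamma> m" "\<forall>\<beta>\<in>C. A \<notin> \<beta> m"
    using C unfolding closed_SG_def by blast
  have CS: "C \<subseteq> SG" using C by (simp add: closed_SG_def)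
  have "H m - A \<in> \<beta> m" if "\<beta> \<in> C" for \<beta>
    using uf_compl[OF SG_uf[of \<beta>] A(1)] A(3) that CS by blast
  then have "H m - A \<in> FY C m" by (auto simp: FY_def)
  then have "H m - A \<in> \<gamma> m" by (rule F)
  then show False using A uf_compl[OF SG_uf[OF g]] by blast
qed

lemma closed_cond:
  assumes R: "\<And>n K. (n, K) \<in> R \<Longrightarrow> K \<subseteq> H n"
  shows "closed_SG {\<gamma>\<in>SG. \<forall>(n, K)\<in>R. K \<in> \<gamma> n}"
  unfolding closed_SG_def
proof (intro conjI ballI)
  fix \<alpha> assume a: "\<alpha> \<in> SG - {\<gamma>\<in>SG. \<forall>(n, K)\<in>R. K \<in> \<gamma> n}"
  then obtain n K where nK: "(n, K) \<in> R" "K \<notin> \<alpha> n" by auto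
  show "\<exists>m A. A \<subseteq> H m \<and> A \<in> \<alpha> m \<and> (\<forall>\<beta>\<in>{\<gamma>\<in>SG. \<forall>(n, K)\<in>R. K \<in> \<gamma> n}. A \<notin> \<beta> m)"
  proof (intro exI conjI ballI)
    show "H n - K \<subseteq> H n" by auto
    show "H n - K \<in> \<alpha> n" using a nK R[OF nK(1)] uf_compl[OF SG_uf, of \<alpha>] by blast
    fix \<beta> assume "\<beta> \<in> {\<gamma>\<in>SG. \<forall>(n, K)\<in>R. K \<in> \<gamma> n}"
    then have "\<beta> \<in> SG" "K \<in> \<beta> n" using nK(1) by auto
    then show "H n - K \<notin> \<beta> n" using R[OF nK(1)] uf_compl[OF SG_uf] by blast
  qed
qed auto

lemma closed_Int:
  assumes a: "closed_SG A" and b: "closed_SG B" shows "closed_SG (A \<inter> B)"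
proof -
  have s: "A \<inter> B \<subseteq> SG" using a by (auto simp: closed_SG_def)
  have "\<exists>m S. S \<subseteq> H m \<and> S \<in> \<alpha> m \<and> (\<forall>\<beta>\<in>A \<inter> B. S \<notin> \<beta> m)" if al: "\<alpha> \<in> SG - A \<inter> B" for \<alpha>
  proof (cases "\<alpha> \<in> A")
    case True then have "\<alpha> \<in> SG - B" using al by auto
    then obtain m S where "S \<subseteq> H m" "S \<in> \<alpha> m" "\<forall>\<beta>\<in>B. S \<notin> \<beta> m"
      using b unfolding closed_SG_def by blast
    then show ?thesis by blast
  next
    case False then have "\<alpha> \<in> SG - A" using al by auto
    then obtain m S where "S \<subseteq> H m" "S \<in> \<alpha> m" "\<forall>\<beta>\<in>A. S \<notin> \<beta> m"
      using a unfolding closed_SG_def by blast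
    then show ?thesis by blast
  qed
  then show ?thesis using s unfolding closed_SG_def by blast
qed

lemma closed_Inter:
  assumes ne: "\<C> \<noteq> {}" and c: "\<And>C. C \<in> \<C> \<Longrightarrow> closed_SG C" shows "closed_SG (\<Inter>\<C>)"
proof -
  obtain C0 where C0: "C0 \<in> \<C>" using ne by blast
  have s: "\<Inter>\<C> \<subseteq> SG" using c[OF C0] C0 by (auto simp: closed_SG_def)
  have "\<exists>m S. S \<subseteq> H m \<and> S \<in> \<alpha> m \<and> (\<forall>\<beta>\<in>\<Inter>\<C>. S \<notin> \<beta> m)" if al: "\<alpha> \<in> SG - \<Inter>\<C>" for \<alpha>
  proof -
    obtain C where C: "C \<in> \<C>" "\<alpha> \<notin> C" using al by auto
    then have "\<alpha> \<in> SG - C" using al by auto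
    then obtain m S where "S \<subseteq> H m" "S \<in> \<alpha> m" "\<forall>\<beta>\<in>C. S \<notin> \<beta> m"
      using c[OF C(1)] unfolding closed_SG_def by blast
    then show ?thesis using C(1) by blast
  qed
  then show ?thesis using s unfolding closed_SG_def by blast
qed




lemma extend_inj:
  assumes x: "x \<in> H N"
  shows "\<exists>e. inj e \<and> map e [0..<N] = x"
proof -
  define e where "e i = (if i < N then x ! i else sum_list x + 1 + i)" for i
  have len: "length x = N" "distinct x" using x by (auto simp: H_def)
  have le: "i < N \<Longrightarrow> x ! i \<le> sum_list x" for i
    using len member_le_sum_list[of "x ! i" x] by auto
  have "inj e"
  proof (rule injI)
    fix i j assume eq: "e i = e j"
    show "i = j"
    proof (cases "i < N"; cases "j < N")
      assume "i < N" "j < N" then show ?thesis using eq len nth_eq_iff_index_eq by (auto simp: e_def)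
    next
      assume "i < N" "\<not> j < N" then show ?thesis using eq le[of i] by (auto simp: e_def)
    next
      assume "\<not> i < N" "j < N" then show ?thesis using eq le[of j] by (auto simp: e_def)
    next
      assume "\<not> i < N" "\<not> j < N" then show ?thesis using eq by (auto simp: e_def)
    qed
  qed
  moreover have "map e [0..<N] = x" using len by (auto simp: e_def intro: nth_equalityI)
  ultimately show ?thesis by blast
qed

lemma Emb_bij:
  assumes f: "f \<in> Emb m n"
  shows "\<exists>g\<in>Sinf. \<forall>i<m. g i = f ! i"
proof -
  define p where "p = f @ sorted_list_of_set ({..<n} - set f)"
  have fd: "distinct f" "set f \<subseteq> {..<n}" "length f = m" using f by (auto simp: Emb_def)
  have pd: "distinct p" using fd by (auto simp: p_def)
  have ps: "set p = {..<n}" using fd by (auto simp: p_def)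
  have pl: "length p = n" using distinct_card[OF pd] ps by simp
  define g where "g i = (if i < n then p ! i else i)" for i
  have "inj g"
  proof (rule injI)
    fix i j assume eq: "g i = g j"
    have pin: "k < n \<Longrightarrow> p ! k < n" for k using ps pl nth_mem[of k p] by auto
    show "i = j"
    proof (cases "i < n"; cases "j < n")
      assume "i < n" "j < n" then show ?thesis using eq pd pl nth_eq_iff_index_eq by (auto simp: g_def)
    next
      assume "i < n" "\<not> j < n" then show ?thesis using eq pin[of i] by (auto simp: g_def)
    next
      assume "\<not> i < n" "j < n" then show ?thesis using eq pin[of j] by (auto simp: g_def)
    next
      assume "\<not> i < n" "\<not> j < n" then show ?thesis using eq by (auto simp: g_def)
    qed
  qed
  moreover have "surj g"
  proof -
    have "y \<in> range g" for y
    proof (cases "y < n")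
      case True
      then have "y \<in> set p" using ps by auto
      then obtain i where "i < length p" "p ! i = y" by (auto simp: in_set_conv_nth)
      then show ?thesis using pl by (auto simp: g_def intro!: image_eqI[of _ _ i])
    next
      case False then show ?thesis by (auto simp: g_def intro!: image_eqI[of _ _ y])
    qed
    then show ?thesis by blast
  qed
  moreover have "\<forall>i<m. g i = f ! i"
  proof (intro allI impI)
    fix i assume "i < m"
    moreover have "m \<le> n" using fd distinct_card[of f] card_mono[of "{..<n}" "set f"] by auto
    ultimately show "g i = f ! i" using fd by (auto simp: g_def p_def nth_append)
  qed
  ultimately show ?thesis by (auto simp: Sinf_def bij_def)
qed

lemma finite_Emb: "finite (Emb m n)"
proof -
  have "Emb m n \<subseteq> {xs. set xs \<subseteq> {..<n} \<and> length xs = m}" by (auto simp: Emb_def)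
  moreover have "finite {xs. set xs \<subseteq> {..<n} \<and> length xs = m}"
    by (rule finite_lists_length_eq) auto
  ultimately show ?thesis by (rule finite_subset)
qed

lemma uf_Inter:
  assumes u: "is_ultrafilter_on X U" and K: "finite K" and P: "\<And>k. k \<in> K \<Longrightarrow> P k \<in> U"
  shows "X \<inter> (\<Inter>k\<in>K. P k) \<in> U"
  using K P
proof (induction K rule: finite_induct)
  case empty then show ?case using uf_top[OF u] by simp
next
  case (insert k K)
  then have "(X \<inter> (\<Inter>k\<in>K. P k)) \<inter> P k \<in> U" using uf_int[OF u] by auto
  moreover have "(X \<inter> (\<Inter>k\<in>K. P k)) \<inter> P k = X \<inter> (\<Inter>k\<in>insert k K. P k)" by auto
  ultimately show ?case by simp
qed

lemma FY_thick:
  assumes Ysub: "Y \<subseteq> SG" and ne: "Y \<noteq> {}" and inv: "invariant_SG Y" and B: "B \<in> FY Y m"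
  shows "thick_H m B"
  unfolding thick_H_def
proof (intro conjI allI impI)
  show "B \<subseteq> H m" using B by (auto simp: FY_def)
  fix n assume "m \<le> n"
  obtain \<alpha> where a: "\<alpha> \<in> Y" using ne by blast
  have aS: "\<alpha> \<in> SG" using a Ysub by auto
  have mem: "{x \<in> H n. comp_tuple x f \<in> B} \<in> \<alpha> n" if f: "f \<in> Emb m n" for f
  proof -
    obtain g where g: "g \<in> Sinf" "\<forall>i<m. g i = f ! i" using Emb_bij[OF f] by blast
    have fl: "length f = m" "set f \<subseteq> {..<n}" using f by (auto simp: Emb_def)
    have gb: "g ` {..<m} \<subseteq> {..<n}" using g fl nth_mem[of _ f] by fastforce
    have "act \<alpha> g \<in> Y" using inv a g(1) by (auto simp: invariant_SG_def)
    then have "B \<in> act \<alpha> g m" using B by (auto simp: FY_def)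
    then have "{x \<in> H n. pi g m x \<in> B} \<in> \<alpha> n"
      unfolding act_char[OF aS Sinf_inj[OF g(1)] gb] by simp
    moreover have "pi g m x = comp_tuple x f" for x
      using g(2) fl by (auto simp: pi_def comp_tuple_def intro: nth_equalityI)
    ultimately show ?thesis by simp
  qed
  have "H n \<inter> (\<Inter>f\<in>Emb m n. {x \<in> H n. comp_tuple x f \<in> B}) \<in> \<alpha> n"
    by (rule uf_Inter[OF SG_uf[OF aS] finite_Emb mem])
  moreover have "{} \<notin> \<alpha> n" by (rule uf_ne[OF SG_uf[OF aS]])
  ultimately have "H n \<inter> (\<Inter>f\<in>Emb m n. {x \<in> H n. comp_tuple x f \<in> B}) \<noteq> {}"
    by (cases "H n \<inter> (\<Inter>f\<in>Emb m n. {x \<in> H n. comp_tuple x f \<in> B}) = {}") simp_all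
  then obtain s where "s \<in> H n \<inter> (\<Inter>f\<in>Emb m n. {x \<in> H n. comp_tuple x f \<in> B})"
    by blast
  then show "\<exists>s\<in>H n. comp_tuple s ` Emb m n \<subseteq> B" by blast
qed

definition hom :: "nat \<Rightarrow> nat set set \<Rightarrow> nat list \<Rightarrow> bool" where
  "hom m A x \<longleftrightarrow> (\<forall>C. C \<subseteq> set x \<longrightarrow> card C = m \<longrightarrow> C \<in> A)"

lemma hom_take: "hom m A x \<Longrightarrow> hom m A (take k x)"
proof -
  assume h: "hom m A x"
  show ?thesis unfolding hom_def
  proof (intro allI impI)
    fix C assume "C \<subseteq> set (take k x)" "card C = m"
    moreover have "set (take k x) \<subseteq> set x" by (rule set_take_subset)
    ultimately show "C \<in> A" using h unfolding hom_def by blast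
  qed
qed

lemma ramsey_hom:
  assumes B: "thick_H N B"
  shows "\<exists>x\<in>B. hom m A x \<or> hom m (msets m - A) x"
proof -
  obtain n' :: nat where n': "partn_lst {..<n'} [N, N] m" using ramsey_full[of "[N, N]" m] by blast
  define n where "n = max n' N"
  have R: "partn_lst {..<n} [N, N] m" using partn_lst_greater_resource[OF n'] by (simp add: n_def)
  have "N \<le> n" by (simp add: n_def)
  then obtain s where s: "s \<in> H n" "comp_tuple s ` Emb N n \<subseteq> B"
    using B unfolding thick_H_def by blast
  have sl: "length s = n" "distinct s" using s by (auto simp: H_def)
  define col where "col I = (if (\<lambda>i. s ! i) ` I \<in> A then 0 else (1::nat))" for I
  have "col \<in> nsets {..<n} m \<rightarrow> {..<length [N, N]}" by (auto simp: col_def)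
  then obtain i Hs where i: "i < length [N, N]" and Hs: "Hs \<in> nsets {..<n} ([N, N] ! i)"
      and hc: "col ` (nsets Hs m) \<subseteq> {i}"
    by (rule partn_lstE[OF R]) auto
  have NN: "[N, N] ! i = N" using i by (auto simp: less_Suc_eq nth_Cons')
  have Hs': "Hs \<subseteq> {..<n}" "finite Hs" "card Hs = N"
    using Hs NN by (auto simp: nsets_def)
  define f where "f = sorted_list_of_set Hs"
  have fE: "f \<in> Emb N n" using Hs' by (auto simp: f_def Emb_def)
  define x where "x = comp_tuple s f"
  have xB: "x \<in> B" using s(2) fE by (auto simp: x_def)
  have setx: "set x = (\<lambda>i. s ! i) ` Hs" using Hs' by (auto simp: x_def comp_tuple_def f_def)
  have inj: "inj_on (\<lambda>i. s ! i) Hs"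
    using Hs'(1) sl unfolding inj_on_def by (metis lessThan_iff nth_eq_iff_index_eq subsetD)
  have key: "\<exists>I. col I = i \<and> (\<lambda>i. s ! i) ` I = C" if C: "C \<subseteq> set x" "card C = m" for C
  proof -
    define I where "I = {j\<in>Hs. s ! j \<in> C}"
    have img: "(\<lambda>i. s ! i) ` I = C" using C(1) setx by (auto simp: I_def)
    have "card I = m" using card_image[OF inj_on_subset[OF inj, of I]] img C(2) by (auto simp: I_def)
    then have "I \<in> nsets Hs m" using Hs'(2) by (auto simp: nsets_def I_def intro: finite_subset)
    then have "col I = i" using hc by auto
    then show ?thesis using img by blast
  qed
  have "hom m A x \<or> hom m (msets m - A) x"
  proof (cases "i = 0")
    case True
    have "hom m A x" unfolding hom_def
    proof (intro allI impI)
      fix C assume C: "C \<subseteq> set x" "card C = m"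
      obtain I where "col I = i" "(\<lambda>i. s ! i) ` I = C" using key[OF C] by blast
      then show "C \<in> A" using True by (auto simp: col_def split: if_splits)
    qed
    then show ?thesis by blast
  next
    case False
    have "hom m (msets m - A) x" unfolding hom_def
    proof (intro allI impI)
      fix C assume C: "C \<subseteq> set x" "card C = m"
      obtain I where "col I = i" "(\<lambda>i. s ! i) ` I = C" using key[OF C] by blast
      then have "C \<notin> A" using False by (auto simp: col_def split: if_splits)
      moreover have "finite C" using C(1) finite_subset by blast
      ultimately show "C \<in> msets m - A" using C by (auto simp: msets_def)
    qed
    then show ?thesis by blast
  qed
  then show ?thesis using xB by blast
qed




lemma FY_top: "Y \<subseteq> SG \<Longrightarrow> H n \<in> FY Y n"
  by (auto simp: FY_def intro: uf_top[OF SG_uf])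

lemma FY_int:
  assumes Y: "Y \<subseteq> SG" and b1: "B1 \<in> FY Y n" and b2: "B2 \<in> FY Y n"
  shows "B1 \<inter> B2 \<in> FY Y n"
proof -
  have "B1 \<inter> B2 \<in> \<alpha> n" if a: "\<alpha> \<in> Y" for \<alpha>
  proof -
    have "B1 \<in> \<alpha> n" "B2 \<in> \<alpha> n" using a b1 b2 by (auto simp: FY_def)
    moreover have "\<alpha> \<in> SG" using a Y by auto
    ultimately show ?thesis using uf_int[OF SG_uf] by blast
  qed
  then show ?thesis using b1 by (auto simp: FY_def)
qed

lemma FY_mono:
  assumes Y: "Y \<subseteq> SG" and b: "B \<in> FY Y n" and s: "B \<subseteq> B'" "B' \<subseteq> H n"
  shows "B' \<in> FY Y n"
proof -
  have "B' \<in> \<alpha> n" if a: "\<alpha> \<in> Y" for \<alpha>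
  proof -
    have "B \<in> \<alpha> n" using a b by (auto simp: FY_def)
    moreover have "\<alpha> \<in> SG" using a Y by auto
    ultimately show ?thesis using uf_mono[OF SG_uf] s by blast
  qed
  then show ?thesis using s by (auto simp: FY_def)
qed

lemma FY_lift:
  assumes Y: "Y \<subseteq> SG" and B: "B \<in> FY Y N" and le: "N \<le> N'"
  shows "{x\<in>H N'. take N x \<in> B} \<in> FY Y N'"
  unfolding FY_def
proof (intro CollectI conjI ballI)
  fix \<alpha> assume "\<alpha> \<in> Y"
  then have a: "\<alpha> \<in> SG" "B \<in> \<alpha> N" using Y B by (auto simp: FY_def)
  have "B \<subseteq> H N" using B by (auto simp: FY_def)
  then show "{x\<in>H N'. take N x \<in> B} \<in> \<alpha> N'" using SG_coh[OF a(1) le] a(2) by blast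
qed auto

lemma FY_anti: "Y0 \<subseteq> Y \<Longrightarrow> FY Y n \<subseteq> FY Y0 n"
  by (auto simp: FY_def)

lemma take_map_upt: "N \<le> N' \<Longrightarrow> take N (map e [0..<N']) = map e [0..<N]"
  by (simp add: take_map)

lemma hom_mono: "A \<subseteq> A' \<Longrightarrow> hom m A x \<Longrightarrow> hom m A' x"
  unfolding hom_def by blast

lemma card_set_H: "y \<in> H m \<Longrightarrow> card (set y) = m"
  by (auto simp: H_def distinct_card)

lemma pi_set: assumes a: "g ` {..<m} \<subseteq> {..<length y}" shows "set (pi g m y) \<subseteq> set y"
proof
  fix z assume "z \<in> set (pi g m y)"
  then obtain i where i: "i < m" "z = y ! g i" by (auto simp: pi_def)
  then have "g i < length y" using a by auto
  then show "z \<in> set y" using i by simp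
qed

definition ix :: "nat list \<Rightarrow> nat \<Rightarrow> nat" where
  "ix s b = (THE i. i < length s \<and> s ! i = b)"

lemma ix: assumes "distinct s" "b \<in> set s" shows "ix s b < length s \<and> s ! ix s b = b"
proof -
  obtain i where i: "i < length s" "s ! i = b" using assms(2) by (auto simp: in_set_conv_nth)
  have u: "\<And>j. j < length s \<and> s ! j = b \<Longrightarrow> j = i" using i assms(1) nth_eq_iff_index_eq by blast
  have "ix s b = i" unfolding ix_def
    by (rule the_equality) (use i in simp, erule u)
  then show ?thesis using i by simp
qed

lemma ix_inj: "distinct s \<Longrightarrow> inj_on (ix s) (set s)"
  by (rule inj_onI) (metis ix)

lemma pi_hom:
  assumes e: "inj e" and g: "inj g" and le: "bnd g m \<le> N" and h: "hom m S (map e [0..<N])"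
  shows "pi g m (map e [0..<bnd g m]) \<in> phi_pre m S"
proof -
  let ?y = "map e [0..<bnd g m]"
  have y: "?y \<in> H (bnd g m)" by (rule map_inj_H[OF e])
  have p: "pi g m ?y \<in> H m" by (rule pi_H[OF g bnd y])
  have "set (pi g m ?y) \<subseteq> set ?y"
    using bnd[of g m] by (intro pi_set) simp
  also have "set ?y \<subseteq> set (map e [0..<N])" using le by auto
  finally have "set (pi g m ?y) \<in> S" using h card_set_H[OF p] by (auto simp: hom_def)
  then show ?thesis using p by (simp add: phi_pre_def phi_def)
qed

definition condR :: "nat \<Rightarrow> nat list set set \<Rightarrow> (nat \<times> nat list set) set" where
  "condR m P = {(bnd g m, {x\<in>H (bnd g m). pi g m x \<in> S}) | g S. g \<in> Sinf \<and> S \<in> P}"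

definition actset :: "nat \<Rightarrow> nat list set set \<Rightarrow> (nat \<Rightarrow> nat list set set) set" where
  "actset m P = {\<gamma>\<in>SG. \<forall>g\<in>Sinf. \<forall>S\<in>P. S \<in> act \<gamma> g m}"

lemma actset_eq:
  assumes P: "P \<subseteq> Pow (H m)"
  shows "actset m P = {\<gamma>\<in>SG. \<forall>(n, K)\<in>condR m P. K \<in> \<gamma> n}"
proof -
  have "(\<forall>g\<in>Sinf. \<forall>S\<in>P. S \<in> act \<gamma> g m) \<longleftrightarrow> (\<forall>(n, K)\<in>condR m P. K \<in> \<gamma> n)" if "\<gamma> \<in> SG" for \<gamma>
  proof -
    have "S \<in> act \<gamma> g m \<longleftrightarrow> {x\<in>H (bnd g m). pi g m x \<in> S} \<in> \<gamma> (bnd g m)" if "g \<in> Sinf" "S \<in> P" for g S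
      using act_char[OF \<open>\<gamma> \<in> SG\<close> Sinf_inj[OF that(1)] bnd] P that(2) by auto
    note E = this
    show ?thesis
    proof
      assume A: "\<forall>g\<in>Sinf. \<forall>S\<in>P. S \<in> act \<gamma> g m"
      show "\<forall>(n, K)\<in>condR m P. K \<in> \<gamma> n"
      proof
        fix q assume "q \<in> condR m P"
        then obtain g S where q: "q = (bnd g m, {x\<in>H (bnd g m). pi g m x \<in> S})" "g \<in> Sinf" "S \<in> P"
          unfolding condR_def by blast
        then show "case q of (n, K) \<Rightarrow> K \<in> \<gamma> n" using A E[OF q(2,3)] by simp
      qed
    next
      assume A: "\<forall>(n, K)\<in>condR m P. K \<in> \<gamma> n"
      show "\<forall>g\<in>Sinf. \<forall>S\<in>P. S \<in> act \<gamma> g m"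
      proof (intro ballI)
        fix g S assume gS: "g \<in> Sinf" "S \<in> P"
        then have "(bnd g m, {x\<in>H (bnd g m). pi g m x \<in> S}) \<in> condR m P" unfolding condR_def by blast
        then show "S \<in> act \<gamma> g m" using A E[OF gS] by auto
      qed
    qed
  qed
  then show ?thesis unfolding actset_def by blast
qed

lemma condR_sub: "(n, K) \<in> condR m P \<Longrightarrow> K \<subseteq> H n"
  by (auto simp: condR_def)

lemma actset_closed: assumes P: "P \<subseteq> Pow (H m)" shows "closed_SG (actset m P)"
proof -
  have "closed_SG {\<gamma>\<in>SG. \<forall>(n, K)\<in>condR m P. K \<in> \<gamma> n}"
    by (rule closed_cond) (rule condR_sub)
  then show ?thesis by (simp only: actset_eq[OF P])
qed

lemma actset_inv: "invariant_SG (actset m P)"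
  unfolding invariant_SG_def
proof (intro ballI)
  fix \<gamma> h assume g: "\<gamma> \<in> actset m P" and h: "h \<in> Sinf"
  have gS: "\<gamma> \<in> SG" using g by (auto simp: actset_def)
  have "act (act \<gamma> h) g = act \<gamma> (h \<circ> g)" if "g \<in> Sinf" for g
    by (rule act_comp[OF gS Sinf_inj[OF h] Sinf_inj[OF that]])
  then show "act \<gamma> h \<in> actset m P"
    using g Sinf_comp[OF h] act_SG[OF gS Sinf_inj[OF h]] by (auto simp: actset_def)
qed

lemma actset_id: "\<gamma> \<in> actset m P \<Longrightarrow> S \<in> P \<Longrightarrow> S \<in> \<gamma> m"
  using act_id[of \<gamma>] Sinf_id by (auto simp: actset_def)

lemma thickH_to_S:
  assumes T: "T \<subseteq> msets m" and th: "thick_H m (phi_pre m T)"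
  shows "thick_S m T"
  unfolding thick_S_def
proof (intro conjI allI impI)
  show "T \<subseteq> msets m" by fact
  fix n assume "m \<le> n"
  then obtain s where s: "s \<in> H n" "comp_tuple s ` Emb m n \<subseteq> phi_pre m T"
    using th unfolding thick_H_def by blast
  have sl: "length s = n" "distinct s" using s by (auto simp: H_def)
  show "\<exists>s\<in>msets n. {B. B \<subseteq> s \<and> B \<in> msets m} \<subseteq> T"
  proof (intro bexI[of _ "set s"] subsetI)
    show "set s \<in> msets n" using sl by (auto simp: msets_def distinct_card)
    fix B assume B: "B \<in> {B. B \<subseteq> set s \<and> B \<in> msets m}"
    define y where "y = sorted_list_of_set B"
    have By: "set y = B" "length y = m" "distinct y" using B by (auto simp: y_def msets_def)
    define f where "f = map (ix s) y"
    have "f \<in> Emb m n"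
    proof -
      have "inj_on (ix s) (set y)" using By B ix_inj[OF sl(2)] inj_on_subset by blast
      then have "distinct f" using By by (simp add: f_def distinct_map)
      moreover have "set f \<subseteq> {..<n}" using By B sl ix[OF sl(2)] by (auto simp: f_def)
      ultimately show ?thesis using By by (auto simp: Emb_def f_def)
    qed
    moreover have "comp_tuple s f = y"
    proof -
      have "\<And>b. b \<in> set y \<Longrightarrow> s ! ix s b = b" using By B ix[OF sl(2)] by auto
      then have "map (\<lambda>b. s ! ix s b) y = y" by (rule map_idI)
      then show ?thesis by (simp add: f_def comp_tuple_def comp_def)
    qed
    ultimately have "y \<in> phi_pre m T" using s(2) by force
    then show "B \<in> T" using By by (simp add: phi_pre_def phi_def)
  qed
qed

lemma thickS_to_H:
  assumes th: "thick_S m S"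
  shows "thick_H m (phi_pre m S)"
  unfolding thick_H_def
proof (intro conjI allI impI)
  show "phi_pre m S \<subseteq> H m" by (auto simp: phi_pre_def)
  fix n assume "m \<le> n"
  then obtain s where s: "s \<in> msets n" "{B. B \<subseteq> s \<and> B \<in> msets m} \<subseteq> S"
    using th unfolding thick_S_def by blast
  define x where "x = sorted_list_of_set s"
  have x: "length x = n" "distinct x" "set x = s" using s(1) by (auto simp: x_def msets_def)
  show "\<exists>s\<in>H n. comp_tuple s ` Emb m n \<subseteq> phi_pre m S"
  proof (intro bexI[of _ x] subsetI)
    show "x \<in> H n" using x by (auto simp: H_def)
    fix z assume "z \<in> comp_tuple x ` Emb m n"
    then obtain f where f: "f \<in> Emb m n" "z = comp_tuple x f" by blast
    have fl: "length f = m" "distinct f" "set f \<subseteq> {..<n}" using f by (auto simp: Emb_def)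
    have "inj_on (\<lambda>i. x ! i) (set f)"
      using fl x unfolding inj_on_def by (metis lessThan_iff nth_eq_iff_index_eq subsetD)
    then have zH: "z \<in> H m" using f fl by (auto simp: H_def comp_tuple_def distinct_map)
    have "set z \<subseteq> s" using f fl x by (auto simp: comp_tuple_def)
    moreover have "set z \<in> msets m" using card_set_H[OF zH] by (auto simp: msets_def)
    ultimately have "set z \<in> S" using s(2) by blast
    then show "z \<in> phi_pre m S" using zH by (simp add: phi_pre_def phi_def)
  qed
qed

lemma thick_H_mono: "thick_H m A \<Longrightarrow> A \<subseteq> B \<Longrightarrow> B \<subseteq> H m \<Longrightarrow> thick_H m B"
  unfolding thick_H_def by (meson order_trans)

lemma phi_pre_msets: "phi_pre m (msets m) = H m"
  by (auto simp: phi_pre_def phi_def msets_def card_set_H)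




lemma minimal_props:
  assumes "minimal_subflow M"
  shows "M \<subseteq> SG" "M \<noteq> {}" "closed_SG M" "invariant_SG M" "subflow M"
    "\<And>Y. Y \<subseteq> M \<Longrightarrow> subflow Y \<Longrightarrow> Y = M"
  using assms by (auto simp: minimal_subflow_def subflow_def closed_SG_def)

lemma subflow_thick: "subflow Y \<Longrightarrow> B \<in> FY Y m \<Longrightarrow> thick_H m B"
  by (rule FY_thick) (auto simp: subflow_def closed_SG_def)

lemma Z_lemma:
  assumes M: "minimal_subflow M"
    and hyp: "\<forall>N. \<forall>B\<in>FY M N. \<exists>x\<in>B. hom m A x"
  shows "phi_pre m A \<in> FY M m"
proof -
  note Mp = minimal_props[OF M]
  let ?R = "{(N, B). B \<in> FY M N} \<union> condR m {phi_pre m A}"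
  have Rsub: "K \<subseteq> H n" if "(n, K) \<in> ?R" for n K
    using that condR_sub[of n K m "{phi_pre m A}"] by (auto simp: FY_def)
  have claim: "R' \<subseteq> ?R \<Longrightarrow> \<exists>N B. B \<in> FY M N \<and> (\<forall>e. inj e \<longrightarrow> map e [0..<N] \<in> B \<longrightarrow>
      hom m A (map e [0..<N]) \<longrightarrow> (\<forall>(n, K)\<in>R'. map e [0..<n] \<in> K))" if fin: "finite R'" for R'
    using fin
  proof (induction R' rule: finite_induct)
    case empty
    show ?case by (intro exI[of _ 0] exI[of _ "H 0"] conjI FY_top[OF Mp(1)]) auto
  next
    case (insert q R'')
    then obtain N B where B: "B \<in> FY M N" and IH: "\<forall>e. inj e \<longrightarrow> map e [0..<N] \<in> B \<longrightarrow>
      hom m A (map e [0..<N]) \<longrightarrow> (\<forall>(n, K)\<in>R''. map e [0..<n] \<in> K)" by auto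
    have q: "q \<in> ?R" using insert by auto
    show ?case
    proof (cases "q \<in> {(N, B). B \<in> FY M N}")
      case True
      then obtain n' K' where q': "q = (n', K')" "K' \<in> FY M n'" by auto
      define N2 where "N2 = max N n'"
      define B2 where "B2 = {x\<in>H N2. take N x \<in> B} \<inter> {x\<in>H N2. take n' x \<in> K'}"
      have "B2 \<in> FY M N2" unfolding B2_def
        by (intro FY_int[OF Mp(1)] FY_lift[OF Mp(1)] B q'(2)) (auto simp: N2_def)
      moreover have "\<forall>(n, K)\<in>insert q R''. map e [0..<n] \<in> K"
        if e: "inj e" "map e [0..<N2] \<in> B2" "hom m A (map e [0..<N2])" for e
      proof -
        have t1: "take N (map e [0..<N2]) = map e [0..<N]" by (rule take_map_upt) (simp add: N2_def)
        have t2: "take n' (map e [0..<N2]) = map e [0..<n']" by (rule take_map_upt) (simp add: N2_def)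
        have "map e [0..<N] \<in> B" "map e [0..<n'] \<in> K'" using e(2) t1 t2 by (auto simp: B2_def)
        moreover have "hom m A (map e [0..<N])" using hom_take[OF e(3), of N] t1 by simp
        ultimately show ?thesis using IH e(1) q'(1) by auto
      qed
      ultimately show ?thesis by blast
    next
      case False
      then have "q \<in> condR m {phi_pre m A}" using q by blast
      then obtain g where g: "g \<in> Sinf" "q = (bnd g m, {x\<in>H (bnd g m). pi g m x \<in> phi_pre m A})"
        unfolding condR_def by blast
      define N2 where "N2 = max N (bnd g m)"
      define B2 where "B2 = {x\<in>H N2. take N x \<in> B}"
      have "B2 \<in> FY M N2" unfolding B2_def
        by (intro FY_lift[OF Mp(1)] B) (auto simp: N2_def)
      moreover have "\<forall>(n, K)\<in>insert q R''. map e [0..<n] \<in> K"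
        if e: "inj e" "map e [0..<N2] \<in> B2" "hom m A (map e [0..<N2])" for e
      proof -
        have t1: "take N (map e [0..<N2]) = map e [0..<N]" by (rule take_map_upt) (simp add: N2_def)
        have "map e [0..<N] \<in> B" using e(2) t1 by (auto simp: B2_def)
        moreover have "hom m A (map e [0..<N])" using hom_take[OF e(3), of N] t1 by simp
        moreover have "map e [0..<bnd g m] \<in> {x\<in>H (bnd g m). pi g m x \<in> phi_pre m A}"
          using map_inj_H[OF e(1)] pi_hom[OF e(1) Sinf_inj[OF g(1)] _ e(3)] by (simp add: N2_def)
        ultimately show ?thesis using IH e(1) g(2) by auto
      qed
      ultimately show ?thesis by blast
    qed
  qed
  have "\<exists>\<gamma>\<in>SG. \<forall>(n, K)\<in>?R. K \<in> \<gamma> n"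
  proof (rule compact_SG)
    show "\<And>n K. (n, K) \<in> ?R \<Longrightarrow> K \<subseteq> H n" by (rule Rsub)
  next
    fix R' assume R': "R' \<subseteq> ?R" "finite R'"
    obtain N B where B: "B \<in> FY M N" and P: "\<forall>e. inj e \<longrightarrow> map e [0..<N] \<in> B \<longrightarrow>
      hom m A (map e [0..<N]) \<longrightarrow> (\<forall>(n, K)\<in>R'. map e [0..<n] \<in> K)" using claim[OF R'(2,1)] by blast
    obtain x where x: "x \<in> B" "hom m A x" using hyp B by blast
    have "x \<in> H N" using x B by (auto simp: FY_def)
    then obtain e where e: "inj e" "map e [0..<N] = x" using extend_inj by blast
    then show "\<exists>e. inj e \<and> (\<forall>(n, K)\<in>R'. map e [0..<n] \<in> K)" using P x by auto
  qed
  then obtain \<gamma> where g: "\<gamma> \<in> SG" "\<forall>(n, K)\<in>?R. K \<in> \<gamma> n" by blast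
  have gM: "\<gamma> \<in> M" using closed_mem[OF Mp(3) g(1)] g(2) by auto
  have PA: "{phi_pre m A} \<subseteq> Pow (H m)" by (auto simp: phi_pre_def)
  have gA: "\<gamma> \<in> actset m {phi_pre m A}" unfolding actset_eq[OF PA] using g by auto
  let ?Z = "M \<inter> actset m {phi_pre m A}"
  have "subflow ?Z" unfolding subflow_def
  proof (intro conjI)
    show "?Z \<noteq> {}" using gM gA by blast
    show "closed_SG ?Z" by (rule closed_Int[OF Mp(3) actset_closed[OF PA]])
    show "invariant_SG ?Z" using Mp(4) actset_inv[of m "{phi_pre m A}"] by (auto simp: invariant_SG_def)
  qed
  then have Z: "?Z = M" using Mp(6) by blast
  have "phi_pre m A \<in> \<alpha> m" if "\<alpha> \<in> M" for \<alpha>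
    using that Z actset_id[of \<alpha> m "{phi_pre m A}"] by blast
  then show ?thesis using PA by (auto simp: FY_def)
qed

lemma dichotomy:
  assumes M: "minimal_subflow M"
  shows "(\<forall>N. \<forall>B\<in>FY M N. \<exists>x\<in>B. hom m A x) \<or> (\<forall>N. \<forall>B\<in>FY M N. \<exists>x\<in>B. hom m (msets m - A) x)"
proof (rule ccontr)
  note Mp = minimal_props[OF M]
  assume "\<not> ?thesis"
  then obtain N1 B1 N2 B2 where B1: "B1 \<in> FY M N1" "\<forall>x\<in>B1. \<not> hom m A x"
    and B2: "B2 \<in> FY M N2" "\<forall>x\<in>B2. \<not> hom m (msets m - A) x" by blast
  define N where "N = max N1 N2"
  define B where "B = {x\<in>H N. take N1 x \<in> B1} \<inter> {x\<in>H N. take N2 x \<in> B2}"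
  have "B \<in> FY M N" unfolding B_def
    by (intro FY_int[OF Mp(1)] FY_lift[OF Mp(1)] B1(1) B2(1)) (auto simp: N_def)
  then have "thick_H N B" by (rule subflow_thick[OF Mp(5)])
  then obtain x where x: "x \<in> B" "hom m A x \<or> hom m (msets m - A) x" using ramsey_hom by blast
  show False
  proof (cases "hom m A x")
    case True
    then have "hom m A (take N1 x)" by (rule hom_take)
    then show False using x(1) B1(2) by (auto simp: B_def)
  next
    case False
    then have "hom m (msets m - A) (take N2 x)" using x(2) hom_take by blast
    then show False using x(1) B2(2) by (auto simp: B_def)
  qed
qed

lemma phi_filter_eq: "phi_filter m F = {T. T \<subseteq> msets m \<and> phi_pre m T \<in> F}"
  by (simp add: phi_filter_def phi_pre_def)

lemma partA:
  assumes M: "minimal_subflow M"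
  shows "thick_ultrafilter_S m (phi_filter m (FY M m))"
proof -
  note Mp = minimal_props[OF M]
  let ?q = "phi_filter m (FY M m)"
  have pp_int: "phi_pre m (A \<inter> B) = phi_pre m A \<inter> phi_pre m B" for A B
    by (auto simp: phi_pre_def)
  have pp_mono: "A \<subseteq> B \<Longrightarrow> phi_pre m A \<subseteq> phi_pre m B" for A B
    by (auto simp: phi_pre_def)
  have pp_sub: "phi_pre m A \<subseteq> H m" for A by (auto simp: phi_pre_def)
  have fil: "is_filter_on (msets m) ?q"
    unfolding is_filter_on_def phi_filter_eq
  proof (intro conjI allI impI)
    show "msets m \<in> {T. T \<subseteq> msets m \<and> phi_pre m T \<in> FY M m}"
      using FY_top[OF Mp(1)] by (simp add: phi_pre_msets)
  next
    fix A B assume "A \<in> {T. T \<subseteq> msets m \<and> phi_pre m T \<in> FY M m}" "B \<in> {T. T \<subseteq> msets m \<and> phi_pre m T \<in> FY M m}"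
    then show "A \<inter> B \<in> {T. T \<subseteq> msets m \<and> phi_pre m T \<in> FY M m}"
      using FY_int[OF Mp(1)] pp_int by auto
  next
    fix A B assume "A \<in> {T. T \<subseteq> msets m \<and> phi_pre m T \<in> FY M m}" "A \<subseteq> B" "B \<subseteq> msets m"
    then show "B \<in> {T. T \<subseteq> msets m \<and> phi_pre m T \<in> FY M m}"
      using FY_mono[OF Mp(1) _ pp_mono pp_sub] by auto
  qed auto
  have ne: "{} \<notin> ?q"
  proof
    assume "{} \<in> ?q"
    then have "{} \<in> FY M m" by (simp add: phi_filter_eq phi_pre_def)
    moreover obtain \<alpha> where "\<alpha> \<in> M" using Mp(2) by blast
    ultimately show False using Mp(1) uf_ne[OF SG_uf] by (auto simp: FY_def)
  qed
  have ultra: "A \<in> ?q \<or> msets m - A \<in> ?q" if A: "A \<subseteq> msets m" for A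
    using A dichotomy[OF M, of m A] Z_lemma[OF M] by (auto simp: phi_filter_eq)
  have thick: "thick_S m T" if "T \<in> ?q" for T
  proof -
    have "T \<subseteq> msets m" "phi_pre m T \<in> FY M m" using that by (auto simp: phi_filter_eq)
    then show ?thesis using thickH_to_S subflow_thick[OF Mp(5)] by blast
  qed
  show ?thesis unfolding thick_ultrafilter_S_def is_ultrafilter_on_def
    using fil ne ultra thick by blast
qed




lemma pp_int: "phi_pre m (A \<inter> B) = phi_pre m A \<inter> phi_pre m B"
  by (auto simp: phi_pre_def)
lemma pp_mono: "A \<subseteq> B \<Longrightarrow> phi_pre m A \<subseteq> phi_pre m B"
  by (auto simp: phi_pre_def)
lemma pp_sub: "phi_pre m A \<subseteq> H m" by (auto simp: phi_pre_def)

lemma fgen_char: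
  assumes p: "is_ultrafilter_on (msets m) p"
  shows "filter_generated (H m) (phi_pre m ` p) = {T. T \<subseteq> H m \<and> (\<exists>S\<in>p. phi_pre m S \<subseteq> T)}"
proof (intro set_eqI iffI)
  fix T assume T: "T \<in> filter_generated (H m) (phi_pre m ` p)"
  then have TH: "T \<subseteq> H m" by (auto simp: filter_generated_def)
  show "T \<in> {T. T \<subseteq> H m \<and> (\<exists>S\<in>p. phi_pre m S \<subseteq> T)}"
  proof (cases "T = H m")
    case True
    then show ?thesis using uf_top[OF p] pp_sub by blast
  next
    case False
    then obtain F where F: "F \<subseteq> phi_pre m ` p" "finite F" "F \<noteq> {}" "\<Inter>F \<subseteq> T"
      using T by (auto simp: filter_generated_def)
    obtain P' where P': "P' \<subseteq> p" "finite P'" "F = phi_pre m ` P'"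
      using finite_subset_image[OF F(2) F(1)] by blast
    have S: "msets m \<inter> (\<Inter>k\<in>P'. k) \<in> p" by (rule uf_Inter[OF p P'(2)]) (use P'(1) in auto)
    have "phi_pre m (msets m \<inter> (\<Inter>k\<in>P'. k)) \<subseteq> \<Inter>F"
      using P'(3) by (auto simp: phi_pre_def)
    then show ?thesis using S TH F(4) by blast
  qed
next
  fix T assume T: "T \<in> {T. T \<subseteq> H m \<and> (\<exists>S\<in>p. phi_pre m S \<subseteq> T)}"
  then obtain S where S: "S \<in> p" "phi_pre m S \<subseteq> T" "T \<subseteq> H m" by blast
  show "T \<in> filter_generated (H m) (phi_pre m ` p)" unfolding filter_generated_def
    using S by (intro CollectI conjI disjI2 exI[of _ "{phi_pre m S}"]) auto
qed

lemma partB_max: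
  assumes tp: "thick_ultrafilter_S m p"
  shows "max_thick_filter_H m (filter_generated (H m) (phi_pre m ` p))"
proof -
  have p: "is_ultrafilter_on (msets m) p" using tp by (simp add: thick_ultrafilter_S_def)
  have pth: "\<And>S. S \<in> p \<Longrightarrow> thick_S m S" using tp by (simp add: thick_ultrafilter_S_def)
  let ?F = "{T. T \<subseteq> H m \<and> (\<exists>S\<in>p. phi_pre m S \<subseteq> T)}"
  have fil: "is_filter_on (H m) ?F" unfolding is_filter_on_def
  proof (intro conjI allI impI)
    show "H m \<in> ?F" using uf_top[OF p] pp_sub by blast
  next
    fix A B assume "A \<in> ?F" "B \<in> ?F"
    then obtain S1 S2 where "S1 \<in> p" "S2 \<in> p" "phi_pre m S1 \<subseteq> A" "phi_pre m S2 \<subseteq> B" "A \<subseteq> H m" by blast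
    then show "A \<inter> B \<in> ?F" using uf_int[OF p] pp_int[of m S1 S2] by blast
  next
    fix A B assume "A \<in> ?F" "A \<subseteq> B" "B \<subseteq> H m"
    then show "B \<in> ?F" by blast
  qed auto
  have thick: "thick_filter_H m ?F" unfolding thick_filter_H_def
  proof (intro conjI fil ballI)
    fix T assume "T \<in> ?F"
    then obtain S where "S \<in> p" "phi_pre m S \<subseteq> T" "T \<subseteq> H m" by blast
    then show "thick_H m T" using thick_H_mono thickS_to_H pth by blast
  qed
  have max: "F' = ?F" if F': "thick_filter_H m F'" "?F \<subseteq> F'" for F'
  proof
    show "?F \<subseteq> F'" by (rule F'(2))
    show "F' \<subseteq> ?F"
    proof
      fix T assume T: "T \<in> F'"
      have Ff: "is_filter_on (H m) F'" and Ft: "\<And>T. T \<in> F' \<Longrightarrow> thick_H m T"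
        using F'(1) by (auto simp: thick_filter_H_def)
      have TH: "T \<subseteq> H m" using Ff T by (auto simp: is_filter_on_def)
      define ST where "ST = {C\<in>msets m. \<forall>y\<in>H m. set y = C \<longrightarrow> y \<in> T}"
      have sub: "phi_pre m ST \<subseteq> T" by (auto simp: ST_def phi_pre_def phi_def)
      have "ST \<in> p"
      proof (rule ccontr)
        assume "ST \<notin> p"
        then have "msets m - ST \<in> p" using uf_compl[OF p] by (auto simp: ST_def)
        then have "phi_pre m (msets m - ST) \<in> F'" using F'(2) pp_sub by blast
        then have "T \<inter> phi_pre m (msets m - ST) \<in> F'" using Ff T by (auto simp: is_filter_on_def)
        then have "thick_H m (T \<inter> phi_pre m (msets m - ST))" by (rule Ft)
        then obtain s where s: "s \<in> H m" "comp_tuple s ` Emb m m \<subseteq> T \<inter> phi_pre m (msets m - ST)"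
          unfolding thick_H_def by blast
        have sl: "length s = m" "distinct s" using s(1) by (auto simp: H_def)
        have "[0..<m] \<in> Emb m m" by (auto simp: Emb_def)
        moreover have "comp_tuple s [0..<m] = s" using sl by (auto simp: comp_tuple_def intro: nth_equalityI)
        ultimately have "s \<in> phi_pre m (msets m - ST)" using s(2) by force
        then have "set s \<in> msets m" "set s \<notin> ST" by (auto simp: phi_pre_def phi_def)
        then obtain y where y: "y \<in> H m" "set y = set s" "y \<notin> T" by (auto simp: ST_def)
        have yl: "length y = m" "distinct y" using y(1) by (auto simp: H_def)
        define f where "f = map (ix s) y"
        have "f \<in> Emb m m"
        proof -
          have "inj_on (ix s) (set y)" using y(2) ix_inj[OF sl(2)] by simp
          then have "distinct f" using yl by (simp add: f_def distinct_map)
          moreover have "set f \<subseteq> {..<m}" using y(2) sl ix[OF sl(2)] by (auto simp: f_def)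
          ultimately show ?thesis using yl by (auto simp: Emb_def f_def)
        qed
        moreover have "comp_tuple s f = y"
        proof -
          have "\<And>b. b \<in> set y \<Longrightarrow> s ! ix s b = b" using y(2) ix[OF sl(2)] by auto
          then have "map (\<lambda>b. s ! ix s b) y = y" by (rule map_idI)
          then show ?thesis by (simp add: f_def comp_tuple_def comp_def)
        qed
        ultimately have "y \<in> T" using s(2) by force
        then show False using y(3) by blast
      qed
      then show "T \<in> ?F" using sub TH by blast
    qed
  qed
  show ?thesis unfolding max_thick_filter_H_def fgen_char[OF p]
    using thick max by blast
qed

lemma subflow_props:
  assumes "subflow Y"
  shows "Y \<subseteq> SG" "Y \<noteq> {}" "closed_SG Y" "invariant_SG Y"
  using assms by (auto simp: subflow_def closed_SG_def)

lemma chain_nonempty: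
  assumes ne: "\<Y> \<noteq> {}" and sf: "\<And>Y. Y \<in> \<Y> \<Longrightarrow> subflow Y"
    and ch: "\<And>Y1 Y2. Y1 \<in> \<Y> \<Longrightarrow> Y2 \<in> \<Y> \<Longrightarrow> Y1 \<subseteq> Y2 \<or> Y2 \<subseteq> Y1"
  shows "\<Inter>\<Y> \<noteq> {}"
proof -
  let ?R = "{(N, B). \<exists>Y\<in>\<Y>. B \<in> FY Y N}"
  have Rsub: "K \<subseteq> H n" if "(n, K) \<in> ?R" for n K
    using that by (auto simp: FY_def)
  have claim: "R' \<subseteq> ?R \<Longrightarrow> \<exists>Y\<in>\<Y>. \<exists>N B. B \<in> FY Y N \<and> (\<forall>e. inj e \<longrightarrow> map e [0..<N] \<in> B \<longrightarrow>
      (\<forall>(n, K)\<in>R'. map e [0..<n] \<in> K))" if fin: "finite R'" for R'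
    using fin
  proof (induction R' rule: finite_induct)
    case empty
    obtain Y0 where Y0: "Y0 \<in> \<Y>" using ne by blast
    show ?case
      by (intro bexI[OF _ Y0] exI[of _ 0] exI[of _ "H 0"] conjI FY_top subflow_props(1)[OF sf[OF Y0]]) auto
  next
    case (insert q R'')
    then obtain Y N B where Y: "Y \<in> \<Y>" and B: "B \<in> FY Y N" and IH: "\<forall>e. inj e \<longrightarrow> map e [0..<N] \<in> B \<longrightarrow>
      (\<forall>(n, K)\<in>R''. map e [0..<n] \<in> K)" by auto
    obtain n' K' Y' where q: "q = (n', K')" "Y' \<in> \<Y>" "K' \<in> FY Y' n'" using insert by auto
    define Y2 where "Y2 = (if Y \<subseteq> Y' then Y else Y')"
    have Y2: "Y2 \<in> \<Y>" "Y2 \<subseteq> Y" "Y2 \<subseteq> Y'" using ch[OF Y q(2)] Y q(2) by (auto simp: Y2_def)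
    have Y2S: "Y2 \<subseteq> SG" using subflow_props(1)[OF sf[OF Y2(1)]] .
    define N2 where "N2 = max N n'"
    define B2 where "B2 = {x\<in>H N2. take N x \<in> B} \<inter> {x\<in>H N2. take n' x \<in> K'}"
    have "B2 \<in> FY Y2 N2" unfolding B2_def
      by (intro FY_int[OF Y2S] FY_lift[OF Y2S] FY_anti[OF Y2(2), THEN subsetD, OF B]
          FY_anti[OF Y2(3), THEN subsetD, OF q(3)]) (auto simp: N2_def)
    moreover have "\<forall>(n, K)\<in>insert q R''. map e [0..<n] \<in> K"
      if e: "inj e" "map e [0..<N2] \<in> B2" for e
    proof -
      have t1: "take N (map e [0..<N2]) = map e [0..<N]" by (rule take_map_upt) (simp add: N2_def)
      have t2: "take n' (map e [0..<N2]) = map e [0..<n']" by (rule take_map_upt) (simp add: N2_def)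
      have "map e [0..<N] \<in> B" "map e [0..<n'] \<in> K'" using e(2) t1 t2 by (auto simp: B2_def)
      then show ?thesis using IH e(1) q(1) by auto
    qed
    ultimately show ?case using Y2(1) by blast
  qed
  have "\<exists>\<gamma>\<in>SG. \<forall>(n, K)\<in>?R. K \<in> \<gamma> n"
  proof (rule compact_SG)
    show "\<And>n K. (n, K) \<in> ?R \<Longrightarrow> K \<subseteq> H n" by (rule Rsub)
  next
    fix R' assume R': "R' \<subseteq> ?R" "finite R'"
    obtain Y N B where Y: "Y \<in> \<Y>" and B: "B \<in> FY Y N" and P: "\<forall>e. inj e \<longrightarrow> map e [0..<N] \<in> B \<longrightarrow>
      (\<forall>(n, K)\<in>R'. map e [0..<n] \<in> K)" using claim[OF R'(2,1)] by blast
    note Yp = subflow_props[OF sf[OF Y]]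
    obtain \<beta> where "\<beta> \<in> Y" using Yp(2) by blast
    then have "B \<in> \<beta> N" "\<beta> \<in> SG" using B Yp(1) by (auto simp: FY_def)
    then have "B \<noteq> {}" using uf_ne[OF SG_uf] by auto
    then obtain x where x: "x \<in> B" by blast
    have "x \<in> H N" using x B by (auto simp: FY_def)
    then obtain e where e: "inj e" "map e [0..<N] = x" using extend_inj by blast
    then show "\<exists>e. inj e \<and> (\<forall>(n, K)\<in>R'. map e [0..<n] \<in> K)" using P x by auto
  qed
  then obtain \<gamma> where g: "\<gamma> \<in> SG" "\<forall>(n, K)\<in>?R. K \<in> \<gamma> n" by blast
  have "\<gamma> \<in> Y" if Y: "Y \<in> \<Y>" for Y
    using closed_mem[OF subflow_props(3)[OF sf[OF Y]] g(1)] g(2) Y by auto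
  then show ?thesis by blast
qed

lemma Yp_subflow:
  assumes tp: "thick_ultrafilter_S m p"
  shows "subflow (actset m (phi_pre m ` p))"
proof -
  have p: "is_ultrafilter_on (msets m) p" using tp by (simp add: thick_ultrafilter_S_def)
  have pth: "\<And>S. S \<in> p \<Longrightarrow> thick_S m S" using tp by (simp add: thick_ultrafilter_S_def)
  have P: "phi_pre m ` p \<subseteq> Pow (H m)" using pp_sub by blast
  let ?R = "condR m (phi_pre m ` p)"
  have claim: "R' \<subseteq> ?R \<Longrightarrow> \<exists>N S0. S0 \<in> p \<and> (\<forall>e. inj e \<longrightarrow> hom m S0 (map e [0..<N]) \<longrightarrow>
      (\<forall>(n, K)\<in>R'. map e [0..<n] \<in> K))" if fin: "finite R'" for R'
    using fin
  proof (induction R' rule: finite_induct)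
    case empty
    show ?case using uf_top[OF p] by blast
  next
    case (insert q R'')
    then obtain N S0 where S0: "S0 \<in> p" and IH: "\<forall>e. inj e \<longrightarrow> hom m S0 (map e [0..<N]) \<longrightarrow>
      (\<forall>(n, K)\<in>R''. map e [0..<n] \<in> K)" by auto
    have "q \<in> ?R" using insert by auto
    then obtain g S' where q: "g \<in> Sinf" "S' \<in> p"
        "q = (bnd g m, {x\<in>H (bnd g m). pi g m x \<in> phi_pre m S'})"
      unfolding condR_def by blast
    define N2 where "N2 = max N (bnd g m)"
    have "S0 \<inter> S' \<in> p" using uf_int[OF p S0 q(2)] .
    moreover have "\<forall>(n, K)\<in>insert q R''. map e [0..<n] \<in> K"
      if e: "inj e" "hom m (S0 \<inter> S') (map e [0..<N2])" for e
    proof -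
      have t1: "take N (map e [0..<N2]) = map e [0..<N]" by (rule take_map_upt) (simp add: N2_def)
      have "hom m S0 (map e [0..<N])" using hom_take[OF hom_mono[OF _ e(2)], of S0 N] t1 by simp
      moreover have hS': "hom m S' (map e [0..<N2])" using hom_mono[OF _ e(2)] by blast
      have "pi g m (map e [0..<bnd g m]) \<in> phi_pre m S'"
        by (rule pi_hom[OF e(1) Sinf_inj[OF q(1)] _ hS']) (simp add: N2_def)
      then have "map e [0..<bnd g m] \<in> {x\<in>H (bnd g m). pi g m x \<in> phi_pre m S'}"
        using map_inj_H[OF e(1)] by simp
      ultimately show ?thesis using IH e(1) q(3) by auto
    qed
    ultimately show ?case by blast
  qed
  have "\<exists>\<gamma>\<in>SG. \<forall>(n, K)\<in>?R. K \<in> \<gamma> n"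
  proof (rule compact_SG)
    show "\<And>n K. (n, K) \<in> ?R \<Longrightarrow> K \<subseteq> H n" by (rule condR_sub)
  next
    fix R' assume R': "R' \<subseteq> ?R" "finite R'"
    obtain N S0 where S0: "S0 \<in> p" and P: "\<forall>e. inj e \<longrightarrow> hom m S0 (map e [0..<N]) \<longrightarrow>
      (\<forall>(n, K)\<in>R'. map e [0..<n] \<in> K)" using claim[OF R'(2,1)] by blast
    define N' where "N' = max N m"
    obtain s where s: "s \<in> msets N'" "{B. B \<subseteq> s \<and> B \<in> msets m} \<subseteq> S0"
      using pth[OF S0] unfolding thick_S_def N'_def by (meson max.cobounded2)
    define x where "x = sorted_list_of_set s"
    have x: "length x = N'" "distinct x" "set x = s" using s(1) by (auto simp: x_def msets_def)
    have hx: "hom m S0 x" unfolding hom_def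
    proof (intro allI impI)
      fix C assume "C \<subseteq> set x" "card C = m"
      moreover have "finite C" using calculation(1) finite_subset by blast
      ultimately show "C \<in> S0" using s(2) x(3) by (auto simp: msets_def)
    qed
    have "x \<in> H N'" using x by (auto simp: H_def)
    then obtain e where e: "inj e" "map e [0..<N'] = x" using extend_inj by blast
    have "hom m S0 (map e [0..<N])"
      using hom_take[OF hx, of N] e(2) take_map_upt[of N N' e] by (simp add: N'_def)
    then show "\<exists>e. inj e \<and> (\<forall>(n, K)\<in>R'. map e [0..<n] \<in> K)" using P e(1) by blast
  qed
  then have "actset m (phi_pre m ` p) \<noteq> {}" using actset_eq[OF P] by auto
  then show ?thesis unfolding subflow_def using actset_closed[OF P] actset_inv by blast
qed

lemma min_exists:
  assumes Y0: "subflow Y0"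
  shows "\<exists>M. minimal_subflow M \<and> M \<subseteq> Y0"
proof -
  let ?A = "uminus ` {Y. subflow Y \<and> Y \<subseteq> Y0}"
  have "\<exists>X\<in>?A. \<forall>Z\<in>?A. X \<subseteq> Z \<longrightarrow> Z = X"
  proof (rule Zorn_Lemma2, intro ballI)
    fix C assume C: "C \<in> chains ?A"
    show "\<exists>U\<in>?A. \<forall>X\<in>C. X \<subseteq> U"
    proof (cases "C = {}")
      case True
      then show ?thesis using Y0 by blast
    next
      case False
      let ?Y = "uminus ` C"
      have CA: "C \<subseteq> ?A" using C by (simp add: chains_def)
      have sfY: "subflow Y \<and> Y \<subseteq> Y0" if "Y \<in> ?Y" for Y
        using that CA by auto
      have chY: "Y1 \<subseteq> Y2 \<or> Y2 \<subseteq> Y1" if "Y1 \<in> ?Y" "Y2 \<in> ?Y" for Y1 Y2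
      proof -
        have c1: "- Y1 \<in> C" and c2: "- Y2 \<in> C" using that by auto
        have "chain\<^sub>\<subseteq> C" using C by (simp add: chains_def)
        then have "- Y1 \<subseteq> - Y2 \<or> - Y2 \<subseteq> - Y1" using c1 c2 unfolding chain_subset_def by blast
        then show ?thesis by auto
      qed
      have neY: "?Y \<noteq> {}" using False by blast
      have "subflow (\<Inter>?Y)" unfolding subflow_def
      proof (intro conjI)
        show "\<Inter>?Y \<noteq> {}" by (rule chain_nonempty[OF neY]) (use sfY chY in blast)+
        show "closed_SG (\<Inter>?Y)"
        proof (rule closed_Inter[OF neY])
          fix Y assume "Y \<in> ?Y"
          then have "subflow Y" using sfY by blast
          then show "closed_SG Y" by (rule subflow_props(3))
        qed
        show "invariant_SG (\<Inter>?Y)" unfolding invariant_SG_def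
        proof (intro ballI)
          fix \<alpha> g assume a: "\<alpha> \<in> \<Inter>?Y" and g: "g \<in> Sinf"
          show "act \<alpha> g \<in> \<Inter>?Y"
          proof (rule InterI)
            fix Y assume Y: "Y \<in> ?Y"
            then have "subflow Y" using sfY by blast
            then have "invariant_SG Y" by (rule subflow_props(4))
            moreover have "\<alpha> \<in> Y" using a Y by blast
            ultimately show "act \<alpha> g \<in> Y" using g unfolding invariant_SG_def by blast
          qed
        qed
      qed
      moreover have "\<Inter>?Y \<subseteq> Y0" using sfY neY by blast
      ultimately have "- (\<Inter>?Y) \<in> ?A" by (intro image_eqI[of _ _ "\<Inter>?Y"]) auto
      moreover have "X \<subseteq> - (\<Inter>?Y)" if "X \<in> C" for X
        using that by auto
      ultimately show ?thesis by blast
    qed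
  qed
  then obtain X where X: "X \<in> ?A" and max: "\<forall>Z\<in>?A. X \<subseteq> Z \<longrightarrow> Z = X" by blast
  then obtain M where M: "X = - M" "subflow M" "M \<subseteq> Y0" by blast
  have "minimal_subflow M" unfolding minimal_subflow_def
  proof (intro conjI allI impI M(2))
    fix Y assume Y: "Y \<subseteq> M" "subflow Y"
    then have "- Y \<in> ?A" using M(3) by auto
    moreover have "X \<subseteq> - Y" using Y(1) M(1) by auto
    ultimately have "- Y = X" using max by blast
    then show "Y = M" using M(1) by auto
  qed
  then show ?thesis using M(3) by blast
qed

lemma partB_exists:
  assumes tp: "thick_ultrafilter_S m p"
  shows "\<exists>M. minimal_subflow M \<and> p = phi_filter m (FY M m)"
proof -
  have p: "is_ultrafilter_on (msets m) p" using tp by (simp add: thick_ultrafilter_S_def)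
  obtain M where M: "minimal_subflow M" "M \<subseteq> actset m (phi_pre m ` p)"
    using min_exists[OF Yp_subflow[OF tp]] by blast
  let ?q = "phi_filter m (FY M m)"
  have q: "is_ultrafilter_on (msets m) ?q" using partA[OF M(1)] by (simp add: thick_ultrafilter_S_def)
  have pq: "p \<subseteq> ?q"
  proof
    fix S assume S: "S \<in> p"
    have "phi_pre m S \<in> \<alpha> m" if "\<alpha> \<in> M" for \<alpha>
      using actset_id[of \<alpha> m "phi_pre m ` p" "phi_pre m S"] that M(2) S by blast
    then have "phi_pre m S \<in> FY M m" using pp_sub by (auto simp: FY_def)
    then show "S \<in> ?q" using uf_sub[OF p S] by (simp add: phi_filter_eq)
  qed
  have "?q \<subseteq> p"
  proof
    fix T assume T: "T \<in> ?q"
    have Tm: "T \<subseteq> msets m" using uf_sub[OF q T] .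
    show "T \<in> p"
    proof (rule ccontr)
      assume "T \<notin> p"
      then have "msets m - T \<in> p" using uf_compl[OF p Tm] by blast
      then have "msets m - T \<in> ?q" using pq by blast
      then show False using uf_compl[OF q Tm] T by blast
    qed
  qed
  then show ?thesis using M(1) pq by blast
qed


theorem mainTheorem9:
  fixes m :: nat
  shows "(\<forall>M. minimal_subflow M \<longrightarrow> thick_ultrafilter_S m (phi_filter m (FY M m)))
       \<and> (\<forall>p. thick_ultrafilter_S m p \<longrightarrow>
             max_thick_filter_H m (filter_generated (H m) (phi_pre m ` p))
           \<and> (\<exists>M. minimal_subflow M \<and> p = phi_filter m (FY M m)))"
    using partA partB_max partB_exists by blast

end
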